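(* Let $(X,d,\preccurlyeq)$ be a preordered $s$-regular $b$-metric space and let $\mathcal F=\{f_\alpha\}_{\alpha\in\mathcal I}$, $\mathcal G=\{g_\alpha\}_{\alpha\in\mathcal I}$ ($\mathcal I$ nonempty) be families of self mappings of $X$. Suppose that for each $\alpha\in\mathcal I$ there are mappings $H_{t,\alpha}:X\to X$, $0\le t\le n$, with $$f_\alpha=H_{0,\alpha}\preccurlyeq H_{1,\alpha}\succcurlyeq H_{2,\alpha}\preccurlyeq\cdots\succcurlyeq H_{n,\alpha}=g_\alpha,$$ and write $\mathcal H_t=\{H_{t,\alpha}\}_{\alpha\in\mathcal I}$. Suppose $x_0\in\mathrm{ComFix}(\mathcal F)$ and: (i) for each $t$, $1\le t\le n$, the family $\mathcal H_t$ is concordantly isotone; (ii) for each odd $t$, $1\le t\le n$, for every chain $C\in\mathcal C^*_1(\mathcal H_t,\preccurlyeq)$ there exists $w\in X$ which is a common upper bound of the chains $H_{t,\alpha}(C)$, $\alpha\in\mathcal I$, and there exist $z\in X$, $\beta\in\mathcal I$ such that for all $\alpha\in\mathcal I$ and $i\in\mathbb N$, $H_{t,\alpha}(w)\succcurlyeq w\succcurlyeq H^i_{t,\beta}(z)$, and $d(H^i_{t,\alpha}(w),H^i_{t,\beta}(z))\to0$ as $i\to\infty$; (iii) for each even $t$, $1\le t\le n$, for every chain $C\in\mathcal C_1(\mathcal H_t,\preccurlyeq)$ there exists $w'\in X$ which is a common lower bound of the chains $H_{t,\alpha}(C)$, $\alpha\in\mathcal I$, and there exist $z'\in X$, $\gamma\in\mathcal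 I$ such that for all $\alpha\in\mathcal I$ and $i\in\mathbb N$, $H_{t,\alpha}(w')\preccurlyeq w'\preccurlyeq H^i_{t,\gamma}(z')$, and $d(H^i_{t,\alpha}(w'),H^i_{t,\gamma}(z'))\to0$ as $i\to\infty$. Then there exists a fence $x_0\preccurlyeq x_1\succcurlyeq x_2\preccurlyeq\cdots\succcurlyeq x_n$ such that for each odd $t$, $x_t\in\mathrm{ComFix}(\mathcal H_t)\cap O^*_X(x_{t-1})$ and $x_t$ is a maximal element of that set, and for each even $t$, $x_t\in\mathrm{ComFix}(\mathcal H_t)\cap O_X(x_{t-1})$ and $x_t$ is a minimal element of that set.
   Context: A $b$-metric space with coefficient $s\ge 1$ is a nonempty set $X$ with $d:X\times X\to[0,\infty)$ such that for all $x,y,z$: $d(x,y)=0$ iff $x=y$; $d(x,y)=d(y,x)$; $d(x,y)\le s[d(x,z)+d(z,y)]$. A preorder is a reflexive transitive relation $\preccurlyeq$; $x\succcurlyeq y$ means $y\preccurlyeq x$; $x\prec y$ means $x\preccurlyeq y$ and $x\ne y$. A preordered $s$-regular $b$-metric space $(X,d,\preccurlyeq)$ is a $b$-metric space with coefficient $s$ with a preorder such that $x\preccurlyeq y\preccurlyeq z$ implies $\max\{d(x,y),d(y,z)\}\le s^2d(x,z)$. For maps $F,G$, $F\preccurlyeq G$ means $F(x)\preccurlyeq G(x)$ for all $x$. A chain is a subset any two elements of which are comparable. $f^i$ is the $i$-th iterate. A family $\{f_\alpha\}_{\alpha\in\mathcal I}$ of self maps is concordantly isotone if for all $x,y$, $x\prec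 y$ implies $f_\alpha(x)\preccurlyeq f_\beta(y)$ for all $\alpha,\beta\in\mathcal I$. $O_X(x_0)=\{x:x\preccurlyeq x_0\}$, $O^*_X(x_0)=\{x:x\succcurlyeq x_0\}$. For a family $\mathcal F=\{f_\alpha\}$: $\mathcal C_1(\mathcal F,\preccurlyeq)$ is the set of chains $C\subset\bigcup_\alpha f_\alpha(X)$ with $f_\alpha(x)\preccurlyeq x$ for all $x\in C,\alpha$, and $x\prec y$ in $C$ implies $x\preccurlyeq f_\alpha(y)$ for all $\alpha$; $\mathcal C^*_1(\mathcal F,\preccurlyeq)$ is the set of chains $C\subset\bigcup_\alpha f_\alpha(X)$ with $f_\alpha(x)\succcurlyeq x$ for all $x\in C,\alpha$, and $x\prec y$ in $C$ implies $f_\alpha(x)\preccurlyeq y$ for all $\alpha$. $\mathrm{ComFix}(\mathcal F)=\{x:f_\alpha(x)=x\ \forall\alpha\}$. A common upper (lower) bound of the sets $H_{t,\alpha}(C)$ is $w$ with $H_{t,\alpha}(x)\preccurlyeq w$ ($w\preccurlyeq H_{t,\alpha}(x)$) for all $x\in C$, $\alpha\in\mathcal I$. A minimal (maximal) element of $A$ is $w\in A$ with no $u\in A$ such that $u\prec w$ ($w\prec u$). *)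

theory Defs
  imports "HOL-Analysis.Analysis"
begin

text \<open>The carrier X is the whole (nonempty) type 'a.\<close>

definition b_metric :: "real \<Rightarrow> ('a \<Rightarrow> 'a \<Rightarrow> real) \<Rightarrow> bool" where
  "b_metric s d \<longleftrightarrow> s \<ge> 1 \<and>
     (\<forall>x y. d x y \<ge> 0) \<and>
     (\<forall>x y. d x y = 0 \<longleftrightarrow> x = y) \<and>
     (\<forall>x y. d x y = d y x) \<and>
     (\<forall>x y z. d x y \<le> s * (d x z + d z y))"

definition preorder_rel :: "('a \<Rightarrow> 'a \<Rightarrow> bool) \<Rightarrow> bool" where
  "preorder_rel le \<longleftrightarrow> (\<forall>x. le x x) \<and> (\<forall>x y z. le x y \<longrightarrow> le y z \<longrightarrow> le x z)"

definition strict_rel :: "('a \<Rightarrow> 'a \<Rightarrow> bool) \<Rightarrow> 'a \<Rightarrow> 'a \<Rightarrow> bool" where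
  "strict_rel le x y \<longleftrightarrow> le x y \<and> x \<noteq> y"

definition preordered_s_regular_bms ::
  "real \<Rightarrow> ('a \<Rightarrow> 'a \<Rightarrow> real) \<Rightarrow> ('a \<Rightarrow> 'a \<Rightarrow> bool) \<Rightarrow> bool" where
  "preordered_s_regular_bms s d le \<longleftrightarrow> b_metric s d \<and> preorder_rel le \<and>
     (\<forall>x y z. le x y \<longrightarrow> le y z \<longrightarrow> max (d x y) (d y z) \<le> s\<^sup>2 * d x z)"

definition is_chain :: "('a \<Rightarrow> 'a \<Rightarrow> bool) \<Rightarrow> 'a set \<Rightarrow> bool" where
  "is_chain le C \<longleftrightarrow> (\<forall>x\<in>C. \<forall>y\<in>C. le x y \<or> le y x)"

definition concordantly_isotone ::
  "('a \<Rightarrow> 'a \<Rightarrow> bool) \<Rightarrow> 'i set \<Rightarrow> ('i \<Rightarrow> 'a \<Rightarrow> 'a) \<Rightarrow> bool" where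
  "concordantly_isotone le I F \<longleftrightarrow>
     (\<forall>x y. strict_rel le x y \<longrightarrow> (\<forall>\<alpha>\<in>I. \<forall>\<beta>\<in>I. le (F \<alpha> x) (F \<beta> y)))"

definition O_X :: "('a \<Rightarrow> 'a \<Rightarrow> bool) \<Rightarrow> 'a \<Rightarrow> 'a set" where
  "O_X le x0 = {x. le x x0}"

definition O_X_star :: "('a \<Rightarrow> 'a \<Rightarrow> bool) \<Rightarrow> 'a \<Rightarrow> 'a set" where
  "O_X_star le x0 = {x. le x0 x}"

definition C1 :: "('a \<Rightarrow> 'a \<Rightarrow> bool) \<Rightarrow> 'i set \<Rightarrow> ('i \<Rightarrow> 'a \<Rightarrow> 'a) \<Rightarrow> 'a set set" where
  "C1 le I F = {C. is_chain le C \<and> C \<subseteq> (\<Union>\<alpha>\<in>I. range (F \<alpha>)) \<and>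
     (\<forall>x\<in>C. \<forall>\<alpha>\<in>I. le (F \<alpha> x) x) \<and>
     (\<forall>x\<in>C. \<forall>y\<in>C. strict_rel le x y \<longrightarrow> (\<forall>\<alpha>\<in>I. le x (F \<alpha> y)))}"

definition C1_star :: "('a \<Rightarrow> 'a \<Rightarrow> bool) \<Rightarrow> 'i set \<Rightarrow> ('i \<Rightarrow> 'a \<Rightarrow> 'a) \<Rightarrow> 'a set set" where
  "C1_star le I F = {C. is_chain le C \<and> C \<subseteq> (\<Union>\<alpha>\<in>I. range (F \<alpha>)) \<and>
     (\<forall>x\<in>C. \<forall>\<alpha>\<in>I. le x (F \<alpha> x)) \<and>
     (\<forall>x\<in>C. \<forall>y\<in>C. strict_rel le x y \<longrightarrow> (\<forall>\<alpha>\<in>I. le (F \<alpha> x) y))}"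

definition ComFix :: "'i set \<Rightarrow> ('i \<Rightarrow> 'a \<Rightarrow> 'a) \<Rightarrow> 'a set" where
  "ComFix I F = {x. \<forall>\<alpha>\<in>I. F \<alpha> x = x}"

definition maximal_elem :: "('a \<Rightarrow> 'a \<Rightarrow> bool) \<Rightarrow> 'a set \<Rightarrow> 'a \<Rightarrow> bool" where
  "maximal_elem le A w \<longleftrightarrow> w \<in> A \<and> \<not> (\<exists>u\<in>A. strict_rel le w u)"

definition minimal_elem :: "('a \<Rightarrow> 'a \<Rightarrow> bool) \<Rightarrow> 'a set \<Rightarrow> 'a \<Rightarrow> bool" where
  "minimal_elem le A w \<longleftrightarrow> w \<in> A \<and> \<not> (\<exists>u\<in>A. strict_rel le u w)"

end

theory Submission
  imports Defs
begin

lemma spD: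
  assumes "preordered_s_regular_bms s d le"
  shows sp_refl: "le x x"
    and sp_trans: "le x y \<Longrightarrow> le y z \<Longrightarrow> le x z"
    and sp_nn: "d x y \<ge> 0"
    and sp_zero: "d x y = 0 \<longleftrightarrow> x = y"
    and sp_sym: "d x y = d y x"
    and sp_reg: "le x y \<Longrightarrow> le y z \<Longrightarrow> max (d x y) (d y z) \<le> s\<^sup>2 * d x z"
    and sp_bm: "b_metric s d"
proof -
  have A: "b_metric s d" and B: "preorder_rel le"
    and C: "\<forall>x y z. le x y \<longrightarrow> le y z \<longrightarrow> max (d x y) (d y z) \<le> s\<^sup>2 * d x z"
    using assms unfolding preordered_s_regular_bms_def by simp_all
  have B1: "\<forall>x. le x x" and B2: "\<forall>x y z. le x y \<longrightarrow> le y z \<longrightarrow> le x z"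
    using B unfolding preorder_rel_def by simp_all
  have A1: "\<forall>x y. d x y \<ge> 0" and A2: "\<forall>x y. d x y = 0 \<longleftrightarrow> x = y" and A3: "\<forall>x y. d x y = d y x"
    using A unfolding b_metric_def by simp_all
  show "le x x" using B1 by simp
  show "le x y \<Longrightarrow> le y z \<Longrightarrow> le x z" using B2 by blast
  show "d x y \<ge> 0" using A1 by simp
  show "d x y = 0 \<longleftrightarrow> x = y" using A2 by simp
  show "d x y = d y x" using A3 by simp
  show "le x y \<Longrightarrow> le y z \<Longrightarrow> max (d x y) (d y z) \<le> s\<^sup>2 * d x z" using C by blast
  show "b_metric s d" by (rule A)
qed

lemma reg_antisym:
  assumes sp: "preordered_s_regular_bms s d le" and "le x y" "le y x"
  shows "x = y"
proof -
  have "max (d x y) (d y x) \<le> s\<^sup>2 * d x x"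
    using sp_reg[OF sp assms(2,3)] .
  moreover have "d x x = 0" using sp_zero[OF sp] by simp
  moreover have "d x y \<ge> 0" using sp_nn[OF sp] .
  ultimately have "d x y = 0" by simp
  then show ?thesis using sp_zero[OF sp] by simp
qed

lemma fix_lemma:
  assumes sp: "preordered_s_regular_bms s d le"
    and iso: "concordantly_isotone le I F" and aI: "\<alpha> \<in> I"
    and w1: "le w (F \<alpha> w)"
    and zb: "\<forall>i. le ((F \<beta> ^^ i) z) w"
    and lim: "(\<lambda>i. d ((F \<alpha> ^^ i) w) ((F \<beta> ^^ i) z)) \<longlonglongrightarrow> 0"
  shows "F \<alpha> w = w"
proof -
  define a where "a i = (F \<alpha> ^^ i) w" for i
  define b where "b i = (F \<beta> ^^ i) z" for i
  have aS: "a (Suc i) = F \<alpha> (a i)" for i unfolding a_def by simp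
  have refl: "\<And>x. le x x" and tr: "\<And>x y z. le x y \<Longrightarrow> le y z \<Longrightarrow> le x z"
    using sp_refl[OF sp] sp_trans[OF sp] by blast+
  have reg: "\<And>x y z. le x y \<Longrightarrow> le y z \<Longrightarrow> max (d x y) (d y z) \<le> s\<^sup>2 * d x z"
    using sp_reg[OF sp] by blast
  have sym: "\<And>x y. d x y = d y x" and nn: "\<And>x y. d x y \<ge> 0"
    and z0: "\<And>x y. d x y = 0 \<longleftrightarrow> x = y"
    using sp_sym[OF sp] sp_nn[OF sp] sp_zero[OF sp] by blast+
  have mono: "le (a i) (a (Suc i))" for i
  proof (induction i)
    case 0 then show ?case using w1 by (simp add: a_def)
  next
    case (Suc i)
    show ?case
    proof (cases "a i = a (Suc i)")
      case True then show ?thesis using refl aS by metis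
    next
      case False
      then have "strict_rel le (a i) (a (Suc i))" using Suc by (simp add: strict_rel_def)
      then show ?thesis using iso aI aS unfolding concordantly_isotone_def by metis
    qed
  qed
  have up1: "le (a (Suc 0)) (a (Suc i))" for i
  proof (induction i)
    case 0 then show ?case using refl by simp
  next
    case (Suc i) then show ?case using mono tr by blast
  qed
  have up0: "le (a 0) (a i)" for i
  proof (induction i)
    case 0 then show ?case using refl by simp
  next
    case (Suc i) then show ?case using mono tr by blast
  qed
  have bnd: "d (a 0) (a (Suc 0)) \<le> s\<^sup>2 * s\<^sup>2 * d (a (Suc i)) (b (Suc i))" for i
  proof -
    have "d (a 0) (a (Suc 0)) \<le> s\<^sup>2 * d (a 0) (a (Suc i))"
      using reg[OF mono[of 0] up1[of i]] by simp
    moreover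
    have bw: "le (b (Suc i)) (a 0)" unfolding a_def b_def funpow_0 using zb by blast
    have "d (a 0) (a (Suc i)) \<le> s\<^sup>2 * d (b (Suc i)) (a (Suc i))"
      using reg[OF bw up0[of "Suc i"]] by simp
    moreover have "s\<^sup>2 \<ge> 0" by simp
    ultimately show ?thesis using sym
      by (metis (no_types, opaque_lifting) mult.assoc mult_left_mono order_trans)
  qed
  have "(\<lambda>i. s\<^sup>2 * s\<^sup>2 * d (a (Suc i)) (b (Suc i))) \<longlonglongrightarrow> s\<^sup>2 * s\<^sup>2 * 0"
    apply (rule tendsto_mult_left)
    using LIMSEQ_Suc[OF lim] unfolding a_def b_def by simp
  then have L: "(\<lambda>i. s\<^sup>2 * s\<^sup>2 * d (a (Suc i)) (b (Suc i))) \<longlonglongrightarrow> 0" by simp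
  have "\<exists>N. \<forall>i\<ge>N. d (a 0) (a (Suc 0)) \<le> s\<^sup>2 * s\<^sup>2 * d (a (Suc i)) (b (Suc i))"
    using bnd by blast
  then have "d (a 0) (a (Suc 0)) \<le> 0"
    by (rule LIMSEQ_le_const[OF L])
  moreover have "d (a 0) (a (Suc 0)) \<ge> 0" by (rule nn)
  ultimately have "d (a 0) (a (Suc 0)) = 0" by simp
  then have "a 0 = a (Suc 0)" using z0 by simp
  then show ?thesis by (simp add: a_def)
qed

lemma step_lemma:
  assumes sp: "preordered_s_regular_bms s d le"
    and I_ne: "I \<noteq> {}"
    and iso: "concordantly_isotone le I F"
    and cond: "\<forall>C\<in>C1_star le I F. \<exists>w.
           (\<forall>x\<in>C. \<forall>\<alpha>\<in>I. le (F \<alpha> x) w) \<and>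
           (\<exists>z. \<exists>\<beta>\<in>I. \<forall>\<alpha>\<in>I.
              (\<forall>i::nat. le w (F \<alpha> w) \<and> le ((F \<beta> ^^ i) z) w) \<and>
              (\<lambda>i. d ((F \<alpha> ^^ i) w) ((F \<beta> ^^ i) z)) \<longlonglongrightarrow> 0)"
    and p: "\<forall>\<alpha>\<in>I. le p (F \<alpha> p)"
  shows "\<exists>x. maximal_elem le (ComFix I F \<inter> O_X_star le p) x"
proof -
  have refl: "\<And>x. le x x" and tr: "\<And>x y z. le x y \<Longrightarrow> le y z \<Longrightarrow> le x z"
    using sp_refl[OF sp] sp_trans[OF sp] by blast+
  have key: "\<exists>w\<in>ComFix I F. \<forall>x\<in>C. \<forall>\<alpha>\<in>I. le (F \<alpha> x) w" if CC: "C \<in> C1_star le I F" for C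
  proof -
    obtain w where wA: "(\<forall>x\<in>C. \<forall>\<alpha>\<in>I. le (F \<alpha> x) w) \<and>
           (\<exists>z. \<exists>\<beta>\<in>I. \<forall>\<alpha>\<in>I.
              (\<forall>i::nat. le w (F \<alpha> w) \<and> le ((F \<beta> ^^ i) z) w) \<and>
              (\<lambda>i. d ((F \<alpha> ^^ i) w) ((F \<beta> ^^ i) z)) \<longlonglongrightarrow> 0)"
      using bspec[OF cond CC] ..
    have w1: "\<forall>x\<in>C. \<forall>\<alpha>\<in>I. le (F \<alpha> x) w" using wA by (rule conjunct1)
    obtain z where "\<exists>\<beta>\<in>I. \<forall>\<alpha>\<in>I.
              (\<forall>i::nat. le w (F \<alpha> w) \<and> le ((F \<beta> ^^ i) z) w) \<and>
              (\<lambda>i. d ((F \<alpha> ^^ i) w) ((F \<beta> ^^ i) z)) \<longlonglongrightarrow> 0"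
      using wA by (elim conjE exE)
    then obtain \<beta> where bI: "\<beta> \<in> I" and w2: "\<forall>\<alpha>\<in>I.
              (\<forall>i::nat. le w (F \<alpha> w) \<and> le ((F \<beta> ^^ i) z) w) \<and>
              (\<lambda>i. d ((F \<alpha> ^^ i) w) ((F \<beta> ^^ i) z)) \<longlonglongrightarrow> 0" ..
    have "F \<alpha> w = w" if "\<alpha> \<in> I" for \<alpha>
    proof -
      have "(\<forall>i::nat. le w (F \<alpha> w) \<and> le ((F \<beta> ^^ i) z) w) \<and>
              (\<lambda>i. d ((F \<alpha> ^^ i) w) ((F \<beta> ^^ i) z)) \<longlonglongrightarrow> 0" using w2 that by (rule bspec)
      then show ?thesis using fix_lemma[OF sp iso that, of w \<beta> z] by simp
    qed
    then show ?thesis using w1 unfolding ComFix_def by blast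
  qed
  obtain \<alpha>0 where a0: "\<alpha>0 \<in> I" using I_ne by blast
  define c where "c = F \<alpha>0 p"
  have cc: "le c (F \<alpha> c)" if "\<alpha> \<in> I" for \<alpha>
    proof (cases "p = c")
      case True then show ?thesis using p that by simp
    next
      case False
      then have "strict_rel le p c" using p a0 c_def by (simp add: strict_rel_def)
      then show ?thesis using iso a0 that c_def unfolding concordantly_isotone_def by blast
    qed
  have cC: "{c} \<in> C1_star le I F"
    using cc unfolding C1_star_def is_chain_def strict_rel_def c_def using a0 refl by auto
  obtain w0 where w0: "w0 \<in> ComFix I F" "\<forall>\<alpha>\<in>I. le (F \<alpha> c) w0" using key[OF cC] by blast
  have "le p c" using p a0 c_def by simp
  moreover have "le c (F \<alpha>0 c)" using cc a0 by simp
  moreover have "le (F \<alpha>0 c) w0" using w0(2) a0 by simp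
  ultimately have "le p w0" using tr by blast
  then have w0A: "w0 \<in> ComFix I F \<inter> O_X_star le p" using w0 unfolding O_X_star_def by blast
  define A where "A = ComFix I F \<inter> O_X_star le p"
  have po: "partial_order_on A (relation_of le A)"
    unfolding partial_order_on_def preorder_on_def
  proof (intro conjI)
    show "relation_of le A \<subseteq> A \<times> A" unfolding relation_of_def by auto
    show "refl_on A (relation_of le A)" unfolding refl_on_def relation_of_def using refl by auto
    show "trans (relation_of le A)" unfolding trans_def relation_of_def using tr by auto
    show "antisym (relation_of le A)" unfolding antisym_def relation_of_def using reg_antisym[OF sp] by auto
  qed
  have ch: "\<exists>u \<in> A. \<forall>a \<in> D. le a u" if D: "D \<in> Chains (relation_of le A)" for D
  proof (cases "D = {}")
    case True then show ?thesis using w0A A_def by blast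
  next
    case False
    have DA: "D \<subseteq> A" using Chains_relation_of[OF D] .
    have "D \<in> C1_star le I F"
    proof -
      have "is_chain le D" using D unfolding Chains_def relation_of_def is_chain_def by blast
      moreover have "D \<subseteq> (\<Union>\<alpha>\<in>I. range (F \<alpha>))"
      proof
        fix x assume "x \<in> D"
        then have "F \<alpha>0 x = x" using DA a0 unfolding A_def ComFix_def by blast
        then show "x \<in> (\<Union>\<alpha>\<in>I. range (F \<alpha>))" using a0 by (metis UN_I rangeI)
      qed
      moreover have "\<forall>x\<in>D. \<forall>\<alpha>\<in>I. F \<alpha> x = x" using DA unfolding A_def ComFix_def by blast
      ultimately show ?thesis unfolding C1_star_def strict_rel_def using refl by auto
    qed
    then obtain w where w: "w \<in> ComFix I F" "\<forall>x\<in>D. \<forall>\<alpha>\<in>I. le (F \<alpha> x) w" using key by blast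
    have fx: "\<forall>x\<in>D. F \<alpha>0 x = x" using DA a0 unfolding A_def ComFix_def by blast
    have ub: "\<forall>x\<in>D. le x w" using w(2) fx a0 by metis
    obtain x1 where "x1 \<in> D" using False by blast
    then have "le p w" using ub DA tr unfolding A_def O_X_star_def by blast
    then have "w \<in> A" using w unfolding A_def O_X_star_def by blast
    then show ?thesis using ub by blast
  qed
  obtain m where m: "m \<in> A" "\<forall>a \<in> A. le m a \<longrightarrow> a = m"
    using predicate_Zorn[OF po ch] by blast
  then have "maximal_elem le A m" unfolding maximal_elem_def strict_rel_def by blast
  then show ?thesis unfolding A_def by blast
qed


lemma flip_space: "preordered_s_regular_bms s d le \<Longrightarrow> preordered_s_regular_bms s d (\<lambda>x y. le y x)"
proof -
  assume sp: "preordered_s_regular_bms s d le"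
  have r: "\<And>x y z. le x y \<Longrightarrow> le y z \<Longrightarrow> max (d x y) (d y z) \<le> s\<^sup>2 * d x z"
    using sp_reg[OF sp] by blast
  have sym: "\<And>x y. d x y = d y x"
    using sp_sym[OF sp] by blast
  have "max (d x y) (d y z) \<le> s\<^sup>2 * d x z" if "le y x" "le z y" for x y z
  proof -
    have "max (d z y) (d y x) \<le> s\<^sup>2 * d z x" using r that by blast
    then show ?thesis using sym[of z y] sym[of y x] sym[of z x] by (simp add: max.commute)
  qed
  moreover have "preorder_rel (\<lambda>x y. le y x)"
    unfolding preorder_rel_def using sp_refl[OF sp] sp_trans[OF sp] by blast
  moreover have "b_metric s d" using sp_bm[OF sp] .
  ultimately show ?thesis unfolding preordered_s_regular_bms_def by simp
qed

lemma flip_iso: "concordantly_isotone le I F \<Longrightarrow> concordantly_isotone (\<lambda>x y. le y x) I F"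
  unfolding concordantly_isotone_def strict_rel_def
proof (intro allI impI ballI)
  fix x y \<alpha> \<beta>
  assume A: "\<forall>x y. le x y \<and> x \<noteq> y \<longrightarrow> (\<forall>\<alpha>\<in>I. \<forall>\<beta>\<in>I. le (F \<alpha> x) (F \<beta> y))"
    and B: "le y x \<and> x \<noteq> y" and a: "\<alpha> \<in> I" and b: "\<beta> \<in> I"
  have "le y x \<and> y \<noteq> x" using B by auto
  then have "\<forall>\<alpha>\<in>I. \<forall>\<beta>\<in>I. le (F \<alpha> y) (F \<beta> x)" using A by blast
  then show "le (F \<beta> y) (F \<alpha> x)" using a b by blast
qed

lemma flip_C1: "C1 le I F = C1_star (\<lambda>x y. le y x) I F"
proof -
  have e1: "\<And>C. (\<forall>x\<in>C. \<forall>y\<in>C. le x y \<and> x \<noteq> y \<longrightarrow> (\<forall>\<alpha>\<in>I. le x (F \<alpha> y))) =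
     (\<forall>x\<in>C. \<forall>y\<in>C. le y x \<and> x \<noteq> y \<longrightarrow> (\<forall>\<alpha>\<in>I. le y (F \<alpha> x)))" by blast
  have e2: "\<And>C. (\<forall>x\<in>C. \<forall>y\<in>C. le x y \<or> le y x) = (\<forall>x\<in>C. \<forall>y\<in>C. le y x \<or> le x y)" by blast
  show ?thesis unfolding C1_def C1_star_def is_chain_def strict_rel_def by (simp only: e1 e2)
qed

lemma flip_min: "minimal_elem le A w = maximal_elem (\<lambda>x y. le y x) A w"
  unfolding minimal_elem_def maximal_elem_def strict_rel_def by blast

lemma flip_OX: "O_X le p = O_X_star (\<lambda>x y. le y x) p"
  unfolding O_X_def O_X_star_def by simp

lemma step_lemma_dual:
  assumes sp: "preordered_s_regular_bms s d le"
    and I_ne: "I \<noteq> {}"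
    and iso: "concordantly_isotone le I F"
    and cond: "\<forall>C\<in>C1 le I F. \<exists>w'.
           (\<forall>x\<in>C. \<forall>\<alpha>\<in>I. le w' (F \<alpha> x)) \<and>
           (\<exists>z'. \<exists>\<gamma>\<in>I. \<forall>\<alpha>\<in>I.
              (\<forall>i::nat. le (F \<alpha> w') w' \<and> le w' ((F \<gamma> ^^ i) z')) \<and>
              (\<lambda>i. d ((F \<alpha> ^^ i) w') ((F \<gamma> ^^ i) z')) \<longlonglongrightarrow> 0)"
    and p: "\<forall>\<alpha>\<in>I. le (F \<alpha> p) p"
  shows "\<exists>x. minimal_elem le (ComFix I F \<inter> O_X le p) x"
  unfolding flip_min flip_OX
  apply (rule step_lemma[OF flip_space[OF sp] I_ne flip_iso[OF iso]])
  using cond p unfolding flip_C1 by auto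

theorem theorem3p3:
  fixes s :: real and d :: "'a \<Rightarrow> 'a \<Rightarrow> real" and le :: "'a \<Rightarrow> 'a \<Rightarrow> bool"
    and I :: "'i set" and f g :: "'i \<Rightarrow> 'a \<Rightarrow> 'a"
    and H :: "nat \<Rightarrow> 'i \<Rightarrow> 'a \<Rightarrow> 'a" and n :: nat and x0 :: 'a
  assumes space: "preordered_s_regular_bms s d le"
    and I_ne: "I \<noteq> {}"
    and H0: "\<forall>\<alpha>\<in>I. H 0 \<alpha> = f \<alpha>"
    and Hn: "\<forall>\<alpha>\<in>I. H n \<alpha> = g \<alpha>"
    and fence_H: "\<forall>\<alpha>\<in>I. \<forall>t<n. \<forall>x.
        (even t \<longrightarrow> le (H t \<alpha> x) (H (Suc t) \<alpha> x)) \<and>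
        (odd t \<longrightarrow> le (H (Suc t) \<alpha> x) (H t \<alpha> x))"
    and x0_fix: "x0 \<in> ComFix I f"
    and iso: "\<forall>t\<in>{1..n}. concordantly_isotone le I (H t)"
    and odd_cond: "\<forall>t\<in>{1..n}. odd t \<longrightarrow>
        (\<forall>C\<in>C1_star le I (H t). \<exists>w.
           (\<forall>x\<in>C. \<forall>\<alpha>\<in>I. le (H t \<alpha> x) w) \<and>
           (\<exists>z. \<exists>\<beta>\<in>I. \<forall>\<alpha>\<in>I.
              (\<forall>i::nat. le w (H t \<alpha> w) \<and> le ((H t \<beta> ^^ i) z) w) \<and>
              (\<lambda>i. d ((H t \<alpha> ^^ i) w) ((H t \<beta> ^^ i) z)) \<longlonglongrightarrow> 0))"
    and even_cond: "\<forall>t\<in>{1..n}. even t \<longrightarrow>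
        (\<forall>C\<in>C1 le I (H t). \<exists>w'.
           (\<forall>x\<in>C. \<forall>\<alpha>\<in>I. le w' (H t \<alpha> x)) \<and>
           (\<exists>z'. \<exists>\<gamma>\<in>I. \<forall>\<alpha>\<in>I.
              (\<forall>i::nat. le (H t \<alpha> w') w' \<and> le w' ((H t \<gamma> ^^ i) z')) \<and>
              (\<lambda>i. d ((H t \<alpha> ^^ i) w') ((H t \<gamma> ^^ i) z')) \<longlonglongrightarrow> 0))"
  shows "\<exists>x :: nat \<Rightarrow> 'a. x 0 = x0 \<and>
     (\<forall>t<n. (even t \<longrightarrow> le (x t) (x (Suc t))) \<and> (odd t \<longrightarrow> le (x (Suc t)) (x t))) \<and>
     (\<forall>t\<in>{1..n}. odd t \<longrightarrow>
        maximal_elem le (ComFix I (H t) \<inter> O_X_star le (x (t - 1))) (x t)) \<and>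
     (\<forall>t\<in>{1..n}. even t \<longrightarrow>
        minimal_elem le (ComFix I (H t) \<inter> O_X le (x (t - 1))) (x t))"
proof -
  define N where "N t y z = (if even t
      then maximal_elem le (ComFix I (H (Suc t)) \<inter> O_X_star le y) z
      else minimal_elem le (ComFix I (H (Suc t)) \<inter> O_X le y) z)" for t y z
  define x where "x = rec_nat x0 (\<lambda>t y. SOME z. N t y z)"
  have x0: "x 0 = x0" unfolding x_def by simp
  have xS: "x (Suc t) = (SOME z. N t (x t) z)" for t unfolding x_def by simp
  have Nfix: "N t y z \<Longrightarrow> z \<in> ComFix I (H (Suc t))" for t y z
    unfolding N_def maximal_elem_def minimal_elem_def by (auto split: if_splits)
  have ex: "\<exists>z. N t y z" if tn: "t < n" and y: "y \<in> ComFix I (H t)" for t y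
  proof (cases "even t")
    case True
    have St: "Suc t \<in> {1..n}" using tn by simp
    have "le y (H (Suc t) \<alpha> y)" if a: "\<alpha> \<in> I" for \<alpha>
    proof -
      have "\<forall>t<n. \<forall>x.
        (even t \<longrightarrow> le (H t \<alpha> x) (H (Suc t) \<alpha> x)) \<and>
        (odd t \<longrightarrow> le (H (Suc t) \<alpha> x) (H t \<alpha> x))" using fence_H a by (rule bspec)
      then have "le (H t \<alpha> y) (H (Suc t) \<alpha> y)" using tn True by simp
      moreover have "H t \<alpha> y = y" using y a unfolding ComFix_def by simp
      ultimately show ?thesis by simp
    qed
    then have pp: "\<forall>\<alpha>\<in>I. le y (H (Suc t) \<alpha> y)" by blast
    have isoS: "concordantly_isotone le I (H (Suc t))" using iso St by (rule bspec)
    have par: "odd (Suc t)" using True by simp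
    have "\<exists>z. maximal_elem le (ComFix I (H (Suc t)) \<inter> O_X_star le y) z"
      by (rule step_lemma[OF space I_ne isoS mp[OF bspec[OF odd_cond St] par] pp])
    then show ?thesis using True unfolding N_def by simp
  next
    case False
    have St: "Suc t \<in> {1..n}" using tn by simp
    have "le (H (Suc t) \<alpha> y) y" if a: "\<alpha> \<in> I" for \<alpha>
    proof -
      have "\<forall>t<n. \<forall>x.
        (even t \<longrightarrow> le (H t \<alpha> x) (H (Suc t) \<alpha> x)) \<and>
        (odd t \<longrightarrow> le (H (Suc t) \<alpha> x) (H t \<alpha> x))" using fence_H a by (rule bspec)
      then have "le (H (Suc t) \<alpha> y) (H t \<alpha> y)" using tn False by simp
      moreover have "H t \<alpha> y = y" using y a unfolding ComFix_def by simp
      ultimately show ?thesis by simp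
    qed
    then have pp: "\<forall>\<alpha>\<in>I. le (H (Suc t) \<alpha> y) y" by blast
    have isoS: "concordantly_isotone le I (H (Suc t))" using iso St by (rule bspec)
    have par: "even (Suc t)" using False by simp
    have "\<exists>z. minimal_elem le (ComFix I (H (Suc t)) \<inter> O_X le y) z"
      by (rule step_lemma_dual[OF space I_ne isoS mp[OF bspec[OF even_cond St] par] pp])
    then show ?thesis using False unfolding N_def by simp
  qed
  have inv: "t \<le> n \<Longrightarrow> x t \<in> ComFix I (H t)" for t
  proof (induction t)
    case 0 then show ?case using x0 x0_fix H0 unfolding ComFix_def by simp
  next
    case (Suc t)
    then have "N t (x t) (x (Suc t))" using ex[of t "x t"] xS someI_ex by (metis Suc_le_lessD less_imp_le)
    then show ?case using Nfix by blast
  qed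
  have Nx: "N t (x t) (x (Suc t))" if "t < n" for t
    using ex[OF that inv[of t]] that xS someI_ex by (metis less_imp_le)
  show ?thesis
  proof (intro exI conjI allI impI ballI)
    show "x 0 = x0" by (rule x0)
  next
    fix t assume "t < n" "even t"
    then show "le (x t) (x (Suc t))" using Nx[of t]
      unfolding N_def maximal_elem_def O_X_star_def by simp
  next
    fix t assume "t < n" "odd t"
    then show "le (x (Suc t)) (x t)" using Nx[of t]
      unfolding N_def minimal_elem_def O_X_def by simp
  next
    fix t assume t: "t \<in> {1..n}" "odd t"
    define u where "u = t - 1"
    have u: "t = Suc u" "u < n" using t unfolding u_def by auto
    then show "maximal_elem le (ComFix I (H t) \<inter> O_X_star le (x (t - 1))) (x t)"
      using Nx[of u] t unfolding N_def by simp
  next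
    fix t assume t: "t \<in> {1..n}" "even t"
    define u where "u = t - 1"
    have u: "t = Suc u" "u < n" using t unfolding u_def by auto
    then show "minimal_elem le (ComFix I (H t) \<inter> O_X le (x (t - 1))) (x t)"
      using Nx[of u] t unfolding N_def by simp
  qed
qed

end
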